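(* Let $R$ be a commutative ring in which every prime ideal is maximal. Let $X$ be the set of maximal ideals $P$ of $R$ such that $PR_P=0$, and let $A$ be the kernel of the natural map $R\to\prod_{P\in X}R_P$. If $R$ is P-coherent, then $A$ is a pure ideal of $R$ (a pure submodule of $R$) and $X=V(A)$.
   Context: $R$ is P-coherent if every principal ideal is finitely presented. An ideal $A$ is pure if $A\to R$ remains injective after tensoring with every module. $V(A)$ is the set of prime ideals containing $A$. *)

theory Defs
  imports Main "HOL.Modules"
begin

definition ideal :: "'a::comm_ring_1 set \<Rightarrow> bool" where
  "ideal I \<longleftrightarrow> 0 \<in> I \<and> (\<forall>x\<in>I. \<forall>y\<in>I. x + y \<in> I) \<and> (\<forall>r. \<forall>x\<in>I. r * x \<in> I)"

definition prime_ideal :: "'a::comm_ring_1 set \<Rightarrow> bool" where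
  "prime_ideal P \<longleftrightarrow> ideal P \<and> P \<noteq> UNIV \<and> (\<forall>a b. a * b \<in> P \<longrightarrow> a \<in> P \<or> b \<in> P)"

definition maximal_ideal :: "'a::comm_ring_1 set \<Rightarrow> bool" where
  "maximal_ideal P \<longleftrightarrow> ideal P \<and> P \<noteq> UNIV \<and>
     (\<forall>J. ideal J \<and> P \<subseteq> J \<longrightarrow> J = P \<or> J = UNIV)"

definition V :: "'a::comm_ring_1 set \<Rightarrow> 'a set set" where
  "V A = {P. prime_ideal P \<and> A \<subseteq> P}"

definition principal_ideal :: "'a::comm_ring_1 \<Rightarrow> 'a set" where
  "principal_ideal a = {r * a | r. True}"

text \<open>In R_P = (R - P)^{-1} R one has r/1 = 0 iff s*r = 0 for some s not in P.\<close>
definition loc_zero :: "'a::comm_ring_1 set \<Rightarrow> 'a \<Rightarrow> bool" where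
  "loc_zero P r \<longleftrightarrow> (\<exists>s. s \<notin> P \<and> s * r = 0)"

text \<open>P R_P = 0 iff p/1 = 0 in R_P for every generator p in P.\<close>
definition ext_zero :: "'a::comm_ring_1 set \<Rightarrow> bool" where
  "ext_zero P \<longleftrightarrow> (\<forall>p\<in>P. loc_zero P p)"

text \<open>Kernel of the natural map R \<rightarrow> prod_{P in X} R_P, r \<mapsto> (r/1)_P.\<close>
definition loc_kernel :: "'a::comm_ring_1 set set \<Rightarrow> 'a set" where
  "loc_kernel X = {r. \<forall>P\<in>X. loc_zero P r}"

text \<open>An ideal I is finitely presented (as R-module) iff there are generators
  x_0..x_{n-1} of I such that the kernel of R^n \<rightarrow> I, c \<mapsto> sum c_i x_i, is a finitely
  generated submodule of R^n. Vectors of R^n are functions nat \<Rightarrow> 'a vanishing from n on.\<close>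
definition relation_module :: "nat \<Rightarrow> (nat \<Rightarrow> 'a::comm_ring_1) \<Rightarrow> (nat \<Rightarrow> 'a) set" where
  "relation_module n x = {c. (\<forall>i\<ge>n. c i = 0) \<and> (\<Sum>i<n. c i * x i) = 0}"

definition fin_gen_submodule :: "(nat \<Rightarrow> 'a::comm_ring_1) set \<Rightarrow> bool" where
  "fin_gen_submodule K \<longleftrightarrow>
     (\<exists>m (g :: nat \<Rightarrow> nat \<Rightarrow> 'a). K = {(\<lambda>i. \<Sum>j<m. r j * g j i) | r. True})"

definition finitely_presented_ideal :: "'a::comm_ring_1 set \<Rightarrow> bool" where
  "finitely_presented_ideal I \<longleftrightarrow>
     (\<exists>n (x :: nat \<Rightarrow> 'a). I = {(\<Sum>i<n. c i * x i) | c. True} \<and>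
        fin_gen_submodule (relation_module n x))"

definition P_coherent :: "'a::comm_ring_1 itself \<Rightarrow> bool" where
  "P_coherent _ \<longleftrightarrow> (\<forall>a::'a. finitely_presented_ideal (principal_ideal a))"

text \<open>For a submodule B of R (an ideal, or R itself) and an R-module M (given by
  scale on an abelian group type 'm), B \<otimes>_R M is the free abelian group on B \<times> M
  modulo the bilinearity relations. Elements of the free abelian group are
  finitely supported functions ('a \<times> 'm) \<Rightarrow> int.\<close>
definition delta :: "'x \<Rightarrow> 'x \<Rightarrow> int" where
  "delta p = (\<lambda>q. if q = p then 1 else 0)"

definition tensor_relators ::
  "('a::comm_ring_1 \<Rightarrow> 'm::ab_group_add \<Rightarrow> 'm) \<Rightarrow> 'a set \<Rightarrow> ('a \<times> 'm \<Rightarrow> int) set" where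
  "tensor_relators scale B =
     {(\<lambda>q. delta (a + a', m) q - delta (a, m) q - delta (a', m) q) | a a' m. a \<in> B \<and> a' \<in> B}
   \<union> {(\<lambda>q. delta (a, m + m') q - delta (a, m) q - delta (a, m') q) | a m m'. a \<in> B}
   \<union> {(\<lambda>q. delta (r * a, m) q - delta (a, scale r m) q) | r a m. a \<in> B}"

text \<open>The subgroup generated by the relators: a formal sum is zero in B \<otimes>_R M iff it lies here.\<close>
inductive_set tensor_rel_span ::
  "('a::comm_ring_1 \<Rightarrow> 'm::ab_group_add \<Rightarrow> 'm) \<Rightarrow> 'a set \<Rightarrow> ('a \<times> 'm \<Rightarrow> int) set"
  for scale B where
  zero: "(\<lambda>_. 0) \<in> tensor_rel_span scale B"
| gen: "g \<in> tensor_relators scale B \<Longrightarrow> g \<in> tensor_rel_span scale B"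
| diff: "x \<in> tensor_rel_span scale B \<Longrightarrow> y \<in> tensor_rel_span scale B \<Longrightarrow>
         (\<lambda>q. x q - y q) \<in> tensor_rel_span scale B"

text \<open>The formal sum sum_i a_i \<otimes> m_i of a list of pairs (every element of
  B \<otimes> M is the class of such a sum).\<close>
definition formal_sum :: "('a \<times> 'm) list \<Rightarrow> ('a \<times> 'm \<Rightarrow> int)" where
  "formal_sum xs = (\<lambda>q. int (count_list xs q))"

text \<open>A is pure iff A \<rightarrow> R stays injective after tensoring with every R-module M.
  The induced map A \<otimes> M \<rightarrow> R \<otimes> M sends the class of a formal sum to the class
  of the same formal sum; injectivity means: a formal sum supported on A \<times> M that
  vanishes in R \<otimes> M already vanishes in A \<otimes> M.\<close>
definition pure_ideal :: "'m::ab_group_add itself \<Rightarrow> 'a::comm_ring_1 set \<Rightarrow> bool" where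
  "pure_ideal _ A \<longleftrightarrow> ideal A \<and>
     (\<forall>(scale :: 'a \<Rightarrow> 'm \<Rightarrow> 'm). module scale \<longrightarrow>
        (\<forall>xs. set xs \<subseteq> A \<times> UNIV \<longrightarrow>
            formal_sum xs \<in> tensor_rel_span scale UNIV \<longrightarrow>
            formal_sum xs \<in> tensor_rel_span scale A))"

end

theory Submission
  imports Defs
begin


lemma ideal_0: "ideal I \<Longrightarrow> 0 \<in> I" by (simp add: ideal_def)
lemma ideal_add: "ideal I \<Longrightarrow> x \<in> I \<Longrightarrow> y \<in> I \<Longrightarrow> x + y \<in> I" by (simp add: ideal_def)
lemma ideal_mult: "ideal I \<Longrightarrow> x \<in> I \<Longrightarrow> r * x \<in> I" by (simp add: ideal_def)
lemma ideal_mult2: "ideal I \<Longrightarrow> x \<in> I \<Longrightarrow> x * r \<in> I" by (metis ideal_mult mult.commute)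
lemma ideal_neg: "ideal I \<Longrightarrow> x \<in> I \<Longrightarrow> - x \<in> I"
  using ideal_mult[of I x "-1"] by simp
lemma ideal_diff: "ideal I \<Longrightarrow> x \<in> I \<Longrightarrow> y \<in> I \<Longrightarrow> x - y \<in> I"
  using ideal_add[of I x "-y"] ideal_neg[of I y] by simp
lemma ideal_one: "ideal I \<Longrightarrow> 1 \<in> I \<Longrightarrow> I = UNIV"
  using ideal_mult[of I 1] by auto
lemma ideal_sum: fixes k::nat shows "ideal I \<Longrightarrow> (\<forall>i<k. t i \<in> I) \<Longrightarrow> (\<Sum>i<k. c i * t i) \<in> I"
  by (induction k) (auto simp: ideal_0 ideal_add ideal_mult)
lemma ideal_pow: "ideal I \<Longrightarrow> x \<in> I \<Longrightarrow> n \<ge> 1 \<Longrightarrow> x ^ n \<in> I"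
  by (cases n) (auto simp: ideal_mult2)

lemma prime_pow: "prime_ideal P \<Longrightarrow> x ^ n \<in> P \<Longrightarrow> x \<in> P"
proof (induction n)
  case 0 then show ?case using ideal_one[of P] by (auto simp: prime_ideal_def)
next
  case (Suc n) then show ?case by (auto simp: prime_ideal_def)
qed

lemma prime_prod: "finite F \<Longrightarrow> prime_ideal P \<Longrightarrow> (\<forall>i\<in>F. h i \<notin> P) \<Longrightarrow> prod h F \<notin> P"
proof (induction F rule: finite_induct)
  case empty then show ?case using ideal_one[of P] by (auto simp: prime_ideal_def)
next
  case (insert x F) then show ?case by (auto simp: prime_ideal_def)
qed

lemma max_add:
  assumes "maximal_ideal Q" "x \<notin> Q" shows "\<exists>q\<in>Q. \<exists>r. 1 = q + r * x"
proof -
  let ?J = "{q + r * x | q r. q \<in> Q}"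
  have I: "ideal Q" using assms by (simp add: maximal_ideal_def)
  have "ideal ?J" unfolding ideal_def
  proof (intro conjI ballI allI)
    have "0 = 0 + 0 * x" by simp
    then show "0 \<in> ?J" using ideal_0[OF I] by blast
  next
    fix a b assume "a \<in> ?J" "b \<in> ?J"
    then obtain q1 r1 q2 r2 where "a = q1 + r1*x" "b = q2 + r2*x" "q1 \<in> Q" "q2 \<in> Q" by blast
    moreover have "a + b = (q1+q2) + (r1+r2)*x" using \<open>a = q1 + r1*x\<close> \<open>b = q2 + r2*x\<close> by (simp add: algebra_simps)
    ultimately show "a + b \<in> ?J" using ideal_add[OF I, of q1 q2] by blast
  next
    fix c a assume "a \<in> ?J"
    then obtain q1 r1 where "a = q1 + r1*x" "q1 \<in> Q" by blast
    moreover have "c * a = (c*q1) + (c*r1)*x" using \<open>a = q1 + r1*x\<close> by (simp add: algebra_simps)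
    ultimately show "c * a \<in> ?J" using ideal_mult[OF I, of q1 c] by blast
  qed
  moreover have "Q \<subseteq> ?J"
  proof
    fix q assume "q \<in> Q"
    moreover have "q = q + 0 * x" by simp
    ultimately show "q \<in> ?J" by blast
  qed
  moreover have "x \<in> ?J"
  proof -
    have "x = 0 + 1 * x" by simp
    then show ?thesis using ideal_0[OF I] by blast
  qed
  ultimately have "?J = UNIV" using assms unfolding maximal_ideal_def by blast
  then have "1 \<in> ?J" by blast
  then show ?thesis by blast
qed

lemma max_prime: assumes "maximal_ideal Q" shows "prime_ideal Q"
  unfolding prime_ideal_def
proof (intro conjI allI impI)
  show "ideal Q" using assms by (auto simp: maximal_ideal_def)
  show "Q \<noteq> UNIV" using assms by (auto simp: maximal_ideal_def)
  fix a b assume ab: "a * b \<in> Q"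
  show "a \<in> Q \<or> b \<in> Q"
  proof (cases "a \<in> Q")
    case True then show ?thesis by blast
  next
    case False
    then obtain q r where q: "q \<in> Q" "1 = q + r * a" using max_add[OF assms] by blast
    then have "b = q * b + r * (a * b)" by (metis mult_1 distrib_right mult.assoc)
    moreover have "q * b + r * (a * b) \<in> Q"
      using ideal_add[OF \<open>ideal Q\<close> ideal_mult2[OF \<open>ideal Q\<close> q(1)] ideal_mult[OF \<open>ideal Q\<close> ab]] .
    ultimately have "b \<in> Q" by simp
    then show ?thesis by blast
  qed
qed

lemma prime_avoid:
  fixes I :: "'a::comm_ring_1 set"
  assumes I: "ideal I" and S1: "1 \<in> S" and Sm: "\<forall>a\<in>S. \<forall>b\<in>S. a * b \<in> S" and dis: "I \<inter> S = {}"
  shows "\<exists>Q. prime_ideal Q \<and> I \<subseteq> Q \<and> Q \<inter> S = {}"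
proof -
  define \<A> where "\<A> = {J. ideal J \<and> I \<subseteq> J \<and> J \<inter> S = {}}"
  have "\<forall>C\<in>chains \<A>. \<exists>U\<in>\<A>. \<forall>X\<in>C. X \<subseteq> U"
  proof
    fix C assume C: "C \<in> chains \<A>"
    show "\<exists>U\<in>\<A>. \<forall>X\<in>C. X \<subseteq> U"
    proof (cases "C = {}")
      case True then show ?thesis using assms by (auto simp: \<A>_def)
    next
      case False
      have CA: "C \<subseteq> \<A>" and ch: "\<forall>X\<in>C. \<forall>Y\<in>C. X \<subseteq> Y \<or> Y \<subseteq> X"
        using C by (auto simp: chains_def chain_subset_def)
      have "ideal (\<Union>C)" unfolding ideal_def
      proof (intro conjI ballI allI)
        show "0 \<in> \<Union>C" using False CA by (auto simp: \<A>_def ideal_def)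
      next
        fix x y assume "x \<in> \<Union>C" "y \<in> \<Union>C"
        then obtain X Y where "X \<in> C" "Y \<in> C" "x \<in> X" "y \<in> Y" by blast
        then show "x + y \<in> \<Union>C" using ch CA unfolding \<A>_def
          by (metis (no_types, lifting) UnionI ideal_add mem_Collect_eq subsetD)
      next
        fix r x assume "x \<in> \<Union>C"
        then obtain X where "X \<in> C" "x \<in> X" by blast
        moreover then have "ideal X" using CA unfolding \<A>_def by blast
        ultimately show "r * x \<in> \<Union>C" using ideal_mult by blast
      qed
      moreover have "I \<subseteq> \<Union>C" "\<Union>C \<inter> S = {}" using False CA by (auto simp: \<A>_def)
      ultimately show ?thesis by (auto simp: \<A>_def)
    qed
  qed
  from Zorn_Lemma2[OF this] obtain M where M: "M \<in> \<A>" and Mmax: "\<forall>X\<in>\<A>. M \<subseteq> X \<longrightarrow> X = M"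
    by blast
  have MI: "ideal M" and IM: "I \<subseteq> M" and MS: "M \<inter> S = {}" using M by (auto simp: \<A>_def)
  have ext: "\<exists>m\<in>M. \<exists>r. m + r * a \<in> S" if "a \<notin> M" for a
  proof (rule ccontr)
    assume nx: "\<not> ?thesis"
    let ?J = "{q + r * a | q r. q \<in> M}"
    have "ideal ?J" unfolding ideal_def
    proof (intro conjI ballI allI)
      have "0 = 0 + 0 * a" by simp
      then show "0 \<in> ?J" using ideal_0[OF MI] by blast
    next
      fix x y assume "x \<in> ?J" "y \<in> ?J"
      then obtain q1 r1 q2 r2 where "x = q1 + r1*a" "y = q2 + r2*a" "q1 \<in> M" "q2 \<in> M" by blast
      moreover have "x + y = (q1+q2) + (r1+r2)*a" using \<open>x = q1 + r1*a\<close> \<open>y = q2 + r2*a\<close> by (simp add: algebra_simps)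
      ultimately show "x + y \<in> ?J" using ideal_add[OF MI, of q1 q2] by blast
    next
      fix c x assume "x \<in> ?J"
      then obtain q1 r1 where "x = q1 + r1*a" "q1 \<in> M" by blast
      moreover have "c * x = (c*q1) + (c*r1)*a" using \<open>x = q1 + r1*a\<close> by (simp add: algebra_simps)
      ultimately show "c * x \<in> ?J" using ideal_mult[OF MI, of q1 c] by blast
    qed
    moreover have "M \<subseteq> ?J"
    proof
      fix q assume "q \<in> M"
      moreover have "q = q + 0 * a" by simp
      ultimately show "q \<in> ?J" by blast
    qed
    moreover have "?J \<inter> S = {}" using nx by blast
    ultimately have "?J \<in> \<A>" "M \<subseteq> ?J" using IM unfolding \<A>_def by auto
    then have "?J = M" using Mmax by blast
    moreover have "a \<in> ?J"
    proof -
      have "a = 0 + 1 * a" by simp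
      then show ?thesis using ideal_0[OF MI] by blast
    qed
    ultimately show False using that by blast
  qed
  have "prime_ideal M" unfolding prime_ideal_def
  proof (intro conjI allI impI)
    show "M \<noteq> UNIV" using MS S1 by auto
    fix a b assume ab: "a * b \<in> M"
    show "a \<in> M \<or> b \<in> M"
    proof (rule ccontr)
      assume "\<not> (a \<in> M \<or> b \<in> M)"
      then obtain m1 r1 m2 r2 where m: "m1 \<in> M" "m2 \<in> M" "m1 + r1*a \<in> S" "m2 + r2*b \<in> S"
        using ext by meson
      have "(m1 + r1*a) * (m2 + r2*b) = m1 * (m2 + r2*b) + (r1*a) * m2 + (r1*r2) * (a*b)"
        by (simp add: algebra_simps)
      also have "\<dots> \<in> M" using m ab MI by (simp add: ideal_add ideal_mult ideal_mult2)
      finally show False using m Sm MS by blast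
    qed
  qed (rule MI)
  then show ?thesis using IM MS by blast
qed




lemma pi_regular:
  fixes x :: "'a::comm_ring_1"
  assumes zerodim: "\<And>P::'a set. prime_ideal P \<Longrightarrow> maximal_ideal P"
  shows "\<exists>n y. x ^ n = x ^ (n+1) * y"
proof (rule ccontr)
  assume nx: "\<not> ?thesis"
  define S where "S = {x ^ n * (1 - x * y) | n y. True}"
  have S1: "1 \<in> S" unfolding S_def by (rule CollectI, rule exI[of _ 0], rule exI[of _ 0]) simp
  have Sm: "\<forall>a\<in>S. \<forall>b\<in>S. a * b \<in> S"
  proof (intro ballI)
    fix a b assume "a \<in> S" "b \<in> S"
    then obtain n y m z where ab: "a = x ^ n * (1 - x * y)" "b = x ^ m * (1 - x * z)"
      unfolding S_def by blast
    have "a * b = x ^ (n+m) * (1 - x * (y + z - x*y*z))" unfolding ab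
      by (simp add: power_add algebra_simps)
    then show "a * b \<in> S" unfolding S_def by blast
  qed
  have I0: "ideal {0::'a}" by (simp add: ideal_def)
  have "{0} \<inter> S = {}"
  proof -
    have "x ^ n * (1 - x * y) \<noteq> 0" for n y
    proof
      assume "x ^ n * (1 - x * y) = 0"
      moreover have "x ^ n * (1 - x * y) = x ^ n - x ^ (n+1) * y" by (simp add: algebra_simps)
      ultimately have "x ^ n = x ^ (n+1) * y" by simp
      then show False using nx by blast
    qed
    then show ?thesis unfolding S_def by auto
  qed
  from prime_avoid[OF I0 S1 Sm this] obtain Q where Q: "prime_ideal Q" "Q \<inter> S = {}" by blast
  have "x \<in> S" unfolding S_def by (rule CollectI, rule exI[of _ 1], rule exI[of _ 0]) simp
  then have "x \<notin> Q" using Q by blast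
  from max_add[OF zerodim[OF Q(1)] this] obtain q r where q: "q \<in> Q" "1 = q + r * x" by blast
  have "q = x ^ 0 * (1 - x * r)" using q(2) by (simp add: algebra_simps)
  then have "q \<in> S" unfolding S_def by blast
  then show False using q Q by blast
qed

lemma idem_elem:
  fixes x :: "'a::comm_ring_1"
  assumes zerodim: "\<And>P::'a set. prime_ideal P \<Longrightarrow> maximal_ideal P"
    and P: "ideal P" and xP: "x \<in> P"
  shows "\<exists>f. f \<in> P \<and> f * (1 - f) = 0 \<and> (\<forall>Q. prime_ideal Q \<longrightarrow> f \<in> Q \<longrightarrow> x \<in> Q)"
proof -
  obtain n y where ny: "x ^ n = x ^ (n+1) * y" using pi_regular[OF zerodim] by blast
  define m where "m = Suc n"
  have m1: "x ^ m = x ^ (m + 1) * y" unfolding m_def using ny by (simp add: algebra_simps)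
  have gen: "x ^ m = x ^ (m + k) * y ^ k" for k
  proof (induction k)
    case 0 then show ?case by simp
  next
    case (Suc k)
    have "x ^ (m + k) * y ^ k = x ^ k * x ^ m * y ^ k" by (simp add: power_add algebra_simps)
    also have "\<dots> = x ^ k * (x ^ (m+1) * y) * y ^ k" using m1 by simp
    also have "\<dots> = x ^ (m + Suc k) * y ^ Suc k" by (simp add: power_add algebra_simps)
    finally show ?case using Suc by simp
  qed
  have xm: "x ^ m = x ^ m * (x ^ m * y ^ m)"
    using gen[of m] by (simp add: power_add algebra_simps)
  define f where "f = x ^ m * y ^ m"
  have "f * f = f" unfolding f_def using xm
    by (metis mult.assoc mult.commute)
  then have "f * (1 - f) = 0" by (simp add: algebra_simps)
  moreover have "f \<in> P" unfolding f_def using ideal_pow[OF P xP, of m] ideal_mult2[OF P] m_def by simp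
  moreover have "x \<in> Q" if "prime_ideal Q" "f \<in> Q" for Q
  proof -
    have "ideal Q" using that by (simp add: prime_ideal_def)
    then have "x ^ m * f \<in> Q" using that ideal_mult by blast
    then have "x ^ m \<in> Q" using xm f_def by simp
    then show ?thesis using prime_pow that by blast
  qed
  ultimately show ?thesis by blast
qed




lemma ann_fg:
  fixes a :: "'a::comm_ring_1"
  assumes coh: "P_coherent TYPE('a)"
  shows "\<exists>(k::nat) t. (\<forall>i<k. t i * a = 0) \<and> (\<forall>r. r * a = 0 \<longrightarrow> (\<exists>c. r = (\<Sum>i<k. c i * t i)))"
proof -
  obtain n x where nx: "principal_ideal a = {(\<Sum>i<n. c i * x i) | c. True}"
    and fg: "fin_gen_submodule (relation_module n x)"
    using coh unfolding P_coherent_def finitely_presented_ideal_def by blast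
  obtain m :: nat and g where K: "relation_module n x = {(\<lambda>i. \<Sum>j<m. r j * g j i) | r. True}"
    using fg unfolding fin_gen_submodule_def by blast
  have "a \<in> principal_ideal a" unfolding principal_ideal_def by (rule CollectI, rule exI[of _ 1]) simp
  then obtain d where d: "a = (\<Sum>i<n. d i * x i)" using nx by blast
  have "\<forall>i<n. \<exists>u. x i = u * a"
  proof (intro allI impI)
    fix i assume "i < n"
    have "(\<Sum>j<n. (if j = i then 1 else 0) * x j) = (\<Sum>j<n. if j = i then x j else 0)"
      by (rule sum.cong) auto
    also have "\<dots> = x i" using \<open>i < n\<close> by simp
    finally have eq: "(\<Sum>j<n. (if j = i then 1 else 0) * x j) = x i" .
    have "x i \<in> {(\<Sum>i<n. c i * x i) | c. True}"
      by (rule CollectI, rule exI[of _ "\<lambda>j. if j = i then 1 else 0"]) (simp only: eq)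
    then have "x i \<in> principal_ideal a" using nx by simp
    then show "\<exists>u. x i = u * a" unfolding principal_ideal_def by blast
  qed
  note ex = this
  define u where "u i = (SOME u. x i = u * a)" for i :: nat
  have u: "x i = u i * a" if "i < n" for i
    unfolding u_def using someI_ex[OF ex[rule_format, OF that]] .
  define t0 where "t0 = 1 - (\<Sum>i<n. d i * u i)"
  define h where "h j = (\<Sum>i<n. g j i * u i)" for j :: nat
  define t where "t i = (if i = 0 then t0 else h (i - 1))" for i :: nat
  have main: "\<exists>c. r = (\<Sum>i<Suc m. c i * t i)" if ra: "r * a = 0" for r
  proof -
    define v where "v i = (if i < n then r * d i else 0)" for i :: nat
    have "v \<in> relation_module n x" unfolding relation_module_def
    proof (intro CollectI conjI allI impI)
      show "v i = 0" if "n \<le> i" for i using that by (simp add: v_def)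
      have "(\<Sum>i<n. v i * x i) = r * (\<Sum>i<n. d i * x i)"
        by (simp add: v_def sum_distrib_left algebra_simps)
      also have "\<dots> = 0" using d ra by simp
      finally show "(\<Sum>i<n. v i * x i) = 0" .
    qed
    then obtain s where s: "v = (\<lambda>i. \<Sum>j<m. s j * g j i)" using K by blast
    have "r = r * t0 + (\<Sum>i<n. (r * d i) * u i)"
      unfolding t0_def by (simp add: sum_distrib_left algebra_simps)
    also have "(\<Sum>i<n. (r * d i) * u i) = (\<Sum>i<n. v i * u i)"
      by (rule sum.cong) (auto simp: v_def)
    also have "\<dots> = (\<Sum>i<n. \<Sum>j<m. s j * g j i * u i)"
      by (simp add: s sum_distrib_right)
    also have "\<dots> = (\<Sum>j<m. s j * h j)"
      unfolding h_def by (subst sum.swap) (simp add: sum_distrib_left algebra_simps)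
    finally have "r = r * t0 + (\<Sum>j<m. s j * h j)" .
    moreover have "(\<Sum>i<Suc m. (if i = 0 then r else s (i - 1)) * t i) = r * t0 + (\<Sum>j<m. s j * h j)"
      by (subst sum.lessThan_Suc_shift) (simp add: t_def)
    ultimately have "r = (\<Sum>i<Suc m. (if i = 0 then r else s (i - 1)) * t i)" by simp
    then show ?thesis by (rule exI[where x="\<lambda>i. if i = 0 then r else s (i - 1)"])
  qed
  have ann: "t i * a = 0" if "i < Suc m" for i
  proof (cases "i = 0")
    case True
    have "(\<Sum>i<n. d i * u i) * a = (\<Sum>i<n. d i * x i)"
      unfolding sum_distrib_right by (rule sum.cong) (simp_all add: u mult.assoc)
    then show ?thesis using True d by (simp add: t_def t0_def algebra_simps)
  next
    case False
    define j where "j = i - 1"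
    have j: "j < m" "t i = h j" using that False by (auto simp: j_def t_def)
    have "(\<lambda>l. \<Sum>j'<m. (if j' = j then 1 else 0) * g j' l) = g j"
    proof
      fix l
      have "(\<Sum>j'<m. (if j' = j then 1 else 0) * g j' l) = (\<Sum>j'<m. if j' = j then g j' l else 0)"
        by (rule sum.cong) auto
      also have "\<dots> = g j l" using j(1) by simp
      finally show "(\<Sum>j'<m. (if j' = j then 1 else 0) * g j' l) = g j l" .
    qed
    note geq = this
    have "g j \<in> {(\<lambda>i. \<Sum>j<m. r j * g j i) | r. True}"
      by (rule CollectI, rule exI[where x="\<lambda>j'. if j' = j then 1 else 0"]) (simp only: geq)
    then have "g j \<in> relation_module n x" using K by simp
    then have "(\<Sum>l<n. g j l * x l) = 0" by (simp add: relation_module_def)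
    moreover have "h j * a = (\<Sum>l<n. g j l * x l)"
      unfolding h_def sum_distrib_right by (rule sum.cong) (simp_all add: u mult.assoc)
    ultimately show ?thesis using j by simp
  qed
  have "(\<forall>i<Suc m. t i * a = 0) \<and> (\<forall>r. r * a = 0 \<longrightarrow> (\<exists>c. r = (\<Sum>i<Suc m. c i * t i)))"
    using ann main by simp
  then show ?thesis by (intro exI[where x="Suc m"] exI[where x=t])
qed




lemma goal1:
  fixes X :: "'a::comm_ring_1 set set" and A :: "'a set"
  assumes zerodim: "\<And>P::'a set. prime_ideal P \<Longrightarrow> maximal_ideal P"
    and X_def: "X = {P. maximal_ideal P \<and> ext_zero P}"
    and A_def: "A = loc_kernel X"
    and coh: "P_coherent TYPE('a)"
    and P: "prime_ideal P" and AP: "A \<subseteq> P" and pP: "p \<in> P"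
  shows "loc_zero P p"
proof (rule ccontr)
  assume np: "\<not> loc_zero P p"
  have PI: "ideal P" using P by (simp add: prime_ideal_def)
  obtain k :: nat and t where kt0: "\<forall>i<k. t i * p = 0" and kt: "\<And>r. r * p = 0 \<Longrightarrow> \<exists>c. r = (\<Sum>i<k. c i * t i)"
    using ann_fg[OF coh, of p] by blast
  define gen where "gen i = (if i = 0 then p else t (i - 1))" for i :: nat
  have genP: "gen i \<in> P" if "i < Suc k" for i
  proof (cases "i = 0")
    case True then show ?thesis using pP by (simp add: gen_def)
  next
    case False
    then have "t (i - 1) * p = 0" using kt0 that by simp
    then show ?thesis using np False unfolding loc_zero_def gen_def by auto
  qed
  have "\<forall>i. \<exists>f. i < Suc k \<longrightarrow> (f \<in> P \<and> f * (1 - f) = 0 \<and> (\<forall>Q. prime_ideal Q \<longrightarrow> f \<in> Q \<longrightarrow> gen i \<in> Q))"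
    using idem_elem[OF zerodim PI genP] by blast
  then obtain f where f: "\<And>i. i < Suc k \<Longrightarrow> f i \<in> P \<and> f i * (1 - f i) = 0 \<and> (\<forall>Q. prime_ideal Q \<longrightarrow> f i \<in> Q \<longrightarrow> gen i \<in> Q)"
    by metis
  define r where "r = (\<Prod>i<Suc k. 1 - f i)"
  have "r \<notin> P" unfolding r_def
  proof (rule prime_prod[OF _ P], simp, intro ballI)
    fix i assume "i \<in> {..<Suc k}"
    then have fi: "f i \<in> P" using f by simp
    show "1 - f i \<notin> P"
    proof
      assume h: "1 - f i \<in> P"
      have "1 \<in> P" using ideal_add[OF PI h fi] by simp
      then show False using ideal_one[OF PI] P by (simp add: prime_ideal_def)
    qed
  qed
  moreover have "r \<in> A" unfolding A_def loc_kernel_def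
  proof (intro CollectI ballI)
    fix Q assume "Q \<in> X"
    then have Qm: "maximal_ideal Q" and Qz: "ext_zero Q" using X_def by auto
    have Qp: "prime_ideal Q" using max_prime[OF Qm] .
    then have QI: "ideal Q" by (simp add: prime_ideal_def)
    have "\<exists>i<Suc k. gen i \<notin> Q"
    proof (cases "p \<in> Q")
      case False then show ?thesis by (intro exI[of _ 0]) (simp add: gen_def)
    next
      case True
      then obtain s where s: "s \<notin> Q" "s * p = 0" using Qz unfolding ext_zero_def loc_zero_def by blast
      then obtain c where c: "s = (\<Sum>i<k. c i * t i)" using kt by blast
      show ?thesis
      proof (rule ccontr)
        assume "\<not> ?thesis"
        then have "\<forall>i<k. t i \<in> Q" by (auto simp: gen_def dest: spec[of _ "Suc _"])
        then have "s \<in> Q" using ideal_sum[OF QI] c by blast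
        then show False using s by blast
      qed
    qed
    then obtain i where i: "i < Suc k" "gen i \<notin> Q" by blast
    have fiQ: "f i \<notin> Q" using f[OF i(1)] i(2) Qp by blast
    have "r = (1 - f i) * (\<Prod>j\<in>{..<Suc k} - {i}. 1 - f j)"
      unfolding r_def using i(1) by (subst prod.remove[of _ i]) auto
    then have "f i * r = 0" using f[OF i(1)] by (simp add: mult.assoc[symmetric])
    then show "loc_zero Q r" using fiQ unfolding loc_zero_def by blast
  qed
  ultimately show False using AP by blast
qed




definition push :: "('x \<Rightarrow> 'x) \<Rightarrow> ('x \<Rightarrow> int) \<Rightarrow> 'x \<Rightarrow> int" where
  "push g x = (\<lambda>q. \<Sum>p\<in>{p. x p \<noteq> 0}. if g p = q then x p else 0)"

lemma push_F:
  assumes "finite F" "{p. x p \<noteq> 0} \<subseteq> F"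
  shows "push g x q = (\<Sum>p\<in>F. if g p = q then x p else 0)"
  unfolding push_def using assms by (intro sum.mono_neutral_right[symmetric]) auto

lemma sum_delta_push:
  assumes "finite F" "p1 \<in> F"
  shows "(\<Sum>p\<in>F. if g p = q then delta p1 p else 0) = delta (g p1) q"
proof -
  have "(\<Sum>p\<in>F. if g p = q then delta p1 p else 0) = (\<Sum>p\<in>F. if p = p1 then delta (g p1) q else 0)"
    by (rule sum.cong) (auto simp: delta_def)
  also have "\<dots> = delta (g p1) q" using assms by simp
  finally show ?thesis .
qed

lemma push_rel3:
  "push g (\<lambda>q. delta p1 q - delta p2 q - delta p3 q) = (\<lambda>q. delta (g p1) q - delta (g p2) q - delta (g p3) q)"
proof
  fix q
  let ?F = "{p1, p2, p3}"
  have "push g (\<lambda>q. delta p1 q - delta p2 q - delta p3 q) q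
     = (\<Sum>p\<in>?F. if g p = q then delta p1 p - delta p2 p - delta p3 p else 0)"
    by (rule push_F) (auto simp: delta_def)
  also have "\<dots> = (\<Sum>p\<in>?F. (if g p = q then delta p1 p else 0) - (if g p = q then delta p2 p else 0) - (if g p = q then delta p3 p else 0))"
    by (rule sum.cong) auto
  also have "\<dots> = delta (g p1) q - delta (g p2) q - delta (g p3) q"
    by (simp only: sum_subtractf sum_delta_push[of ?F] finite.emptyI finite_insert insertI1 insertI2 insert_commute)
  finally show "push g (\<lambda>q. delta p1 q - delta p2 q - delta p3 q) q = delta (g p1) q - delta (g p2) q - delta (g p3) q" .
qed

lemma push_rel2:
  "push g (\<lambda>q. delta p1 q - delta p2 q) = (\<lambda>q. delta (g p1) q - delta (g p2) q)"
proof
  fix q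
  let ?F = "{p1, p2}"
  have "push g (\<lambda>q. delta p1 q - delta p2 q) q
     = (\<Sum>p\<in>?F. if g p = q then delta p1 p - delta p2 p else 0)"
    by (rule push_F) (auto simp: delta_def)
  also have "\<dots> = (\<Sum>p\<in>?F. (if g p = q then delta p1 p else 0) - (if g p = q then delta p2 p else 0))"
    by (rule sum.cong) auto
  also have "\<dots> = delta (g p1) q - delta (g p2) q"
    by (simp only: sum_subtractf sum_delta_push[of ?F] finite.emptyI finite_insert insertI1 insertI2 insert_commute)
  finally show "push g (\<lambda>q. delta p1 q - delta p2 q) q = delta (g p1) q - delta (g p2) q" .
qed

lemma push_diff:
  assumes "finite {p. x p \<noteq> 0}" "finite {p. y p \<noteq> 0}"
  shows "push g (\<lambda>q. x q - y q) = (\<lambda>q. push g x q - push g y q)"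
proof
  fix q
  let ?F = "{p. x p \<noteq> 0} \<union> {p. y p \<noteq> 0}"
  have "push g (\<lambda>q. x q - y q) q = (\<Sum>p\<in>?F. if g p = q then x p - y p else 0)"
    by (rule push_F) (use assms in auto)
  also have "\<dots> = (\<Sum>p\<in>?F. (if g p = q then x p else 0) - (if g p = q then y p else 0))"
    by (rule sum.cong) auto
  also have "\<dots> = push g x q - push g y q"
    by (simp only: sum_subtractf, subst (1 2) push_F[of ?F]) (use assms in auto)
  finally show "push g (\<lambda>q. x q - y q) q = push g x q - push g y q" .
qed

lemma span_push:
  fixes A :: "'a::comm_ring_1 set" and scale :: "'a \<Rightarrow> 'm::ab_group_add \<Rightarrow> 'm"
  assumes AI: "ideal A" and eA: "e \<in> A"
  shows "x \<in> tensor_rel_span scale UNIV \<Longrightarrow>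
    finite {p. x p \<noteq> 0} \<and> push (\<lambda>(a, m). (a * e, m)) x \<in> tensor_rel_span scale A"
proof (induction rule: tensor_rel_span.induct)
  case zero
  have eq: "push (\<lambda>(a, m). (a * e, m)) (\<lambda>_. 0::int) = (\<lambda>_. 0)" by (simp add: push_def)
  show ?case by (simp only: eq) (simp add: tensor_rel_span.zero)
next
  case (gen x)
  let ?g = "\<lambda>(a::'a, m::'m). (a * e, m)"
  from gen consider
      (r1) a a' m where "x = (\<lambda>q. delta (a + a', m) q - delta (a, m) q - delta (a', m) q)"
    | (r2) a m m' where "x = (\<lambda>q. delta (a, m + m') q - delta (a, m) q - delta (a, m') q)"
    | (r3) r a m where "x = (\<lambda>q. delta (r * a, m) q - delta (a, scale r m) q)"
    unfolding tensor_relators_def by blast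
  then show ?case
  proof cases
    case r1
    have fin: "finite {p. x p \<noteq> 0}"
      by (rule finite_subset[of _ "{(a + a', m), (a, m), (a', m)}"]) (auto simp: r1 delta_def)
    have "push ?g x = (\<lambda>q. delta (a*e + a'*e, m) q - delta (a*e, m) q - delta (a'*e, m) q)"
      unfolding r1 push_rel3 by (simp add: distrib_right)
    moreover have "a * e \<in> A" "a' * e \<in> A" using ideal_mult AI eA by blast+
    ultimately have "push ?g x \<in> tensor_relators scale A" unfolding tensor_relators_def by blast
    then show ?thesis using fin tensor_rel_span.gen by blast
  next
    case r2
    have fin: "finite {p. x p \<noteq> 0}"
      by (rule finite_subset[of _ "{(a, m + m'), (a, m), (a, m')}"]) (auto simp: r2 delta_def)
    have "push ?g x = (\<lambda>q. delta (a*e, m + m') q - delta (a*e, m) q - delta (a*e, m') q)"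
      unfolding r2 push_rel3 by simp
    moreover have "a * e \<in> A" using ideal_mult AI eA by blast
    ultimately have "push ?g x \<in> tensor_relators scale A" unfolding tensor_relators_def by blast
    then show ?thesis using fin tensor_rel_span.gen by blast
  next
    case r3
    have fin: "finite {p. x p \<noteq> 0}"
      by (rule finite_subset[of _ "{(r * a, m), (a, scale r m)}"]) (auto simp: r3 delta_def)
    have "push ?g x = (\<lambda>q. delta (r * (a*e), m) q - delta (a*e, scale r m) q)"
      unfolding r3 push_rel2 by (simp add: mult.assoc)
    moreover have "a * e \<in> A" using ideal_mult AI eA by blast
    ultimately have "push ?g x \<in> tensor_relators scale A" unfolding tensor_relators_def by blast
    then show ?thesis using fin tensor_rel_span.gen by blast
  qed
next
  case (diff x y)
  have fin: "finite {p. x p - y p \<noteq> 0}"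
    by (rule finite_subset[of _ "{p. x p \<noteq> 0} \<union> {p. y p \<noteq> 0}"]) (use diff in auto)
  have "push (\<lambda>(a, m). (a * e, m)) (\<lambda>q. x q - y q)
     = (\<lambda>q. push (\<lambda>(a, m). (a * e, m)) x q - push (\<lambda>(a, m). (a * e, m)) y q)"
    using diff.IH by (intro push_diff) auto
  moreover have "(\<lambda>q. push (\<lambda>(a, m). (a * e, m)) x q - push (\<lambda>(a, m). (a * e, m)) y q) \<in> tensor_rel_span scale A"
    using diff.IH by (intro tensor_rel_span.diff) auto
  ultimately show ?case using fin by simp
qed

lemma push_formal_sum:
  assumes "\<forall>p\<in>set xs. g p = p"
  shows "push g (formal_sum xs) = formal_sum xs"
proof
  fix q
  have "push g (formal_sum xs) q = (\<Sum>p\<in>set xs. if g p = q then formal_sum xs p else 0)"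
    by (rule push_F) (auto simp: formal_sum_def count_list_0_iff)
  also have "\<dots> = (\<Sum>p\<in>set xs. if p = q then formal_sum xs p else 0)"
    by (rule sum.cong) (use assms in auto)
  also have "\<dots> = formal_sum xs q"
    by (simp add: formal_sum_def count_list_0_iff)
  finally show "push g (formal_sum xs) q = formal_sum xs q" .
qed




theorem proposition3p8:
  fixes X :: "'a::comm_ring_1 set set" and A :: "'a set"
  assumes zerodim: "\<And>P::'a set. prime_ideal P \<Longrightarrow> maximal_ideal P"
    and X_def: "X = {P. maximal_ideal P \<and> ext_zero P}"
    and A_def: "A = loc_kernel X"
    and coh: "P_coherent TYPE('a)"
  shows "pure_ideal TYPE('m::ab_group_add) A \<and> X = V A"
proof -
  have PX: "prime_ideal P" if "P \<in> X" for P using that X_def max_prime by blast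
  have nz: "s \<notin> P \<Longrightarrow> t \<notin> P \<Longrightarrow> s * t \<notin> P" if "P \<in> X" for P s t
    using PX[OF that] by (auto simp: prime_ideal_def)
  have one: "1 \<notin> P" if "P \<in> X" for P
    using PX[OF that] ideal_one[of P] by (auto simp: prime_ideal_def)
  have AI: "ideal A" unfolding ideal_def
  proof (intro conjI ballI allI)
    show "0 \<in> A" unfolding A_def loc_kernel_def loc_zero_def using one by fastforce
  next
    fix x y assume "x \<in> A" "y \<in> A"
    show "x + y \<in> A" unfolding A_def loc_kernel_def
    proof (intro CollectI ballI)
      fix P assume P: "P \<in> X"
      obtain s where "s \<notin> P" "s * x = 0" using \<open>x \<in> A\<close> P unfolding A_def loc_kernel_def loc_zero_def by blast
      moreover obtain t where "t \<notin> P" "t * y = 0" using \<open>y \<in> A\<close> P unfolding A_def loc_kernel_def loc_zero_def by blast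
      moreover have "(s * t) * (x + y) = t * (s * x) + s * (t * y)" by (simp add: algebra_simps)
      ultimately have "s * t \<notin> P" "(s * t) * (x + y) = 0"
        using nz[OF P] by simp_all
      then show "loc_zero P (x + y)" unfolding loc_zero_def by blast
    qed
  next
    fix r x assume "x \<in> A"
    show "r * x \<in> A" unfolding A_def loc_kernel_def
    proof (intro CollectI ballI)
      fix P assume P: "P \<in> X"
      obtain s where "s \<notin> P" "s * x = 0" using \<open>x \<in> A\<close> P unfolding A_def loc_kernel_def loc_zero_def by blast
      moreover have "s * (r * x) = r * (s * x)" by (simp add: algebra_simps)
      ultimately show "loc_zero P (r * x)" unfolding loc_zero_def by auto
    qed
  qed
  have XV: "X = V A"
  proof
    show "X \<subseteq> V A"
    proof
      fix P assume P: "P \<in> X"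
      have "A \<subseteq> P"
      proof
        fix a assume "a \<in> A"
        then obtain s where "s \<notin> P" "s * a = 0" using P unfolding A_def loc_kernel_def loc_zero_def by blast
        moreover have "s * a \<in> P" using PX[OF P] ideal_0[of P] \<open>s * a = 0\<close> by (simp add: prime_ideal_def)
        ultimately show "a \<in> P" using PX[OF P] unfolding prime_ideal_def by blast
      qed
      then show "P \<in> V A" using PX[OF P] by (simp add: V_def)
    qed
  next
    show "V A \<subseteq> X"
    proof
      fix P assume "P \<in> V A"
      then have P: "prime_ideal P" "A \<subseteq> P" by (auto simp: V_def)
      have "ext_zero P" unfolding ext_zero_def
        using goal1[OF zerodim X_def A_def coh P] by blast
      then show "P \<in> X" using zerodim[OF P(1)] X_def by blast
    qed
  qed
  have pel: "\<exists>b\<in>A. a * b = a" if aA: "a \<in> A" for a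
  proof (rule ccontr)
    assume nb: "\<not> ?thesis"
    define J where "J = {x + r | x r. x \<in> A \<and> r * a = 0}"
    have JI: "ideal J" unfolding ideal_def
    proof (intro conjI ballI allI)
      have "(0::'a) = 0 + 0 \<and> 0 * a = 0" by simp
      then show "0 \<in> J" unfolding J_def using ideal_0[OF AI] by blast
    next
      fix u v assume "u \<in> J" "v \<in> J"
      then obtain x r y s where "u = x + r" "v = y + s" "x \<in> A" "y \<in> A" "r * a = 0" "s * a = 0"
        unfolding J_def by blast
      moreover then have "u + v = (x + y) + (r + s)" "(r + s) * a = 0" by (simp_all add: algebra_simps)
      moreover have "x + y \<in> A" using ideal_add[OF AI] calculation by blast
      ultimately show "u + v \<in> J" unfolding J_def
        by (intro CollectI exI[of _ "x + y"] exI[of _ "r + s"]) simp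
    next
      fix c u assume "u \<in> J"
      then obtain x r where xr: "u = x + r" "x \<in> A" "r * a = 0" unfolding J_def by blast
      have "c * x \<in> A" using ideal_mult[OF AI xr(2)] .
      moreover have "c * u = c * x + c * r" using xr(1) by (simp add: algebra_simps)
      moreover have "(c * r) * a = 0" using xr(3) by (simp add: mult.assoc)
      ultimately show "c * u \<in> J" unfolding J_def
        by (intro CollectI exI[of _ "c * x"] exI[of _ "c * r"]) simp
    qed
    have "1 \<notin> J"
    proof
      assume "1 \<in> J"
      then obtain x r where "1 = x + r" "x \<in> A" "r * a = 0" unfolding J_def by blast
      then have "a = a * (x + r)" by (metis mult_1_right)
      also have "\<dots> = a * x + r * a" by (simp add: algebra_simps)
      finally have "a * x = a" using \<open>r * a = 0\<close> by simp
      then show False using nb \<open>x \<in> A\<close> by blast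
    qed
    then have "J \<inter> {1} = {}" by blast
    from prime_avoid[OF JI _ _ this] obtain Q where Q: "prime_ideal Q" "J \<subseteq> Q" "1 \<notin> Q" by auto
    have "A \<subseteq> J"
    proof
      fix x assume "x \<in> A"
      then have "x = x + 0 \<and> 0 * a = 0" by simp
      then show "x \<in> J" unfolding J_def using \<open>x \<in> A\<close> by blast
    qed
    then have "Q \<in> V A" using Q by (auto simp: V_def)
    then have "Q \<in> X" using XV by simp
    then obtain s where "s \<notin> Q" "s * a = 0" using aA unfolding A_def loc_kernel_def loc_zero_def by blast
    moreover have "s \<in> J"
    proof -
      have "s = 0 + s \<and> 0 \<in> A \<and> s * a = 0" using \<open>s * a = 0\<close> ideal_0[OF AI] by simp
      then show ?thesis unfolding J_def by blast
    qed
    ultimately show False using Q by blast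
  qed
  have lst: "\<exists>e\<in>A. \<forall>a\<in>set as. a * e = a" if "set as \<subseteq> A" for as
    using that
  proof (induction as)
    case Nil then show ?case using ideal_0[OF AI] by auto
  next
    case (Cons b as)
    then obtain e where e: "e \<in> A" "\<forall>a\<in>set as. a * e = a" by auto
    obtain c where c: "c \<in> A" "b * c = b" using pel Cons.prems by auto
    define e' where "e' = e + c - e * c"
    have "e' \<in> A" unfolding e'_def using ideal_diff[OF AI ideal_add[OF AI e(1) c(1)] ideal_mult[OF AI c(1), of e]] .
    moreover have "a * e' = a" if "a \<in> set (b # as)" for a
    proof (cases "a = b")
      case True
      have "b * e' = b * e + b * c - (b * c) * e" unfolding e'_def by (simp add: algebra_simps)
      then show ?thesis using True c by simp
    next
      case False
      then have "a * e = a" using that e by auto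
      have "a * e' = a * e + a * c - (a * e) * c" unfolding e'_def by (simp add: algebra_simps)
      then show ?thesis using \<open>a * e = a\<close> by simp
    qed
    ultimately show ?case by blast
  qed
  have "pure_ideal TYPE('m) A" unfolding pure_ideal_def
  proof (intro conjI allI impI AI)
    fix scale :: "'a \<Rightarrow> 'm \<Rightarrow> 'm" and xs :: "('a \<times> 'm) list"
    assume xsA: "set xs \<subseteq> A \<times> UNIV" and sp: "formal_sum xs \<in> tensor_rel_span scale UNIV"
    have "set (map fst xs) \<subseteq> A" using xsA by auto
    then obtain e where e: "e \<in> A" "\<forall>a\<in>set (map fst xs). a * e = a" using lst by blast
    have fixp: "\<forall>p\<in>set xs. (\<lambda>(a, m). (a * e, m)) p = p" using e(2) by auto
    show "formal_sum xs \<in> tensor_rel_span scale A"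
      using span_push[OF AI e(1) sp] push_formal_sum[OF fixp] by simp
  qed
  then show ?thesis using XV by blast
qed


end
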